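(* For any time warps $f$ and $g$: $\mathrm{last}(f\circ g)=\omega$ if, and only if, $\mathrm{last}(g)=\mathrm{last}(f)=\omega$; and $\mathrm{last}(f^\star)=\omega$ if, and only if, $\mathrm{last}(f)=\omega$.
   Context: Let $\omega^+=\omega\cup\{\omega\}$. A time warp is a join-preserving map $f\colon\omega^+\to\omega^+$, time warps being ordered pointwise. $p(m)=\bigvee\{k\in\omega\mid k<m\}$; $f^\star$ is the largest time warp $h$ with $f\circ h\le p$. For a time warp $f$, $\mathrm{last}(f)=\min\{m\in\omega^+\mid f(m)=f(\omega)\}$. *)

theory Defs
  imports "HOL-Library.Extended_Nat"
begin

text \<open>omega^+ is modelled by enat: the naturals plus infinity (= omega).
  A time warp is a map preserving all joins (arbitrary suprema, including the empty one).\<close>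

definition time_warp :: "(enat \<Rightarrow> enat) \<Rightarrow> bool" where
  "time_warp f \<longleftrightarrow> (\<forall>A. f (Sup A) = Sup (f ` A))"

definition pred_tw :: "enat \<Rightarrow> enat" where
  "pred_tw m = Sup {enat k | k. enat k < m}"

definition star :: "(enat \<Rightarrow> enat) \<Rightarrow> (enat \<Rightarrow> enat)" where
  "star f = (GREATEST h. time_warp h \<and> f \<circ> h \<le> pred_tw)"

definition last_tw :: "(enat \<Rightarrow> enat) \<Rightarrow> enat" where
  "last_tw f = (LEAST m. f m = f \<infinity>)"

end

theory Submission
  imports Defs
begin

lemma tw_mono: assumes "time_warp f" shows "mono f"
proof
  fix x y :: enat assume "x \<le> y"
  hence "Sup {x, y} = y" by (simp add: sup_absorb2)
  hence "f y = Sup {f x, f y}" using assms unfolding time_warp_def by (metis image_insert image_empty)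
  thus "f x \<le> f y" by (metis Sup_upper insertI1)
qed

lemma Sup_range_enat: "Sup (range enat) = \<infinity>"
  unfolding Sup_enat_def using finite_imageD[of enat UNIV] by (auto simp: inj_on_def)

lemma tw_inf: assumes "time_warp f" shows "f \<infinity> = (SUP n. f (enat n))"
  using assms unfolding time_warp_def by (metis Sup_range_enat image_image)

lemma tw_attain: assumes "time_warp f" "f \<infinity> \<noteq> \<infinity>" shows "\<exists>n. f (enat n) = f \<infinity>"
proof -
  let ?A = "range (\<lambda>n. f (enat n))"
  have e: "f \<infinity> = Sup ?A" using tw_inf[OF assms(1)] by simp
  have "?A \<noteq> {}" by auto
  with e assms(2) have "finite ?A" unfolding Sup_enat_def by (auto split: if_splits)
  hence "Max ?A \<in> ?A" using \<open>?A \<noteq> {}\<close> by (rule Max_in)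
  moreover have "Sup ?A = Max ?A" using \<open>finite ?A\<close> \<open>?A \<noteq> {}\<close> unfolding Sup_enat_def by simp
  ultimately show ?thesis using e by auto
qed

lemma last_inf_iff: "last_tw f = \<infinity> \<longleftrightarrow> (\<forall>n. f (enat n) \<noteq> f \<infinity>)"
proof
  assume a: "last_tw f = \<infinity>"
  show "\<forall>n. f (enat n) \<noteq> f \<infinity>"
  proof (intro allI notI)
    fix n assume "f (enat n) = f \<infinity>"
    hence "last_tw f \<le> enat n" unfolding last_tw_def by (rule Least_le)
    with a show False by simp
  qed
next
  assume a: "\<forall>n. f (enat n) \<noteq> f \<infinity>"
  have "f (last_tw f) = f \<infinity>" unfolding last_tw_def by (rule LeastI[of _ \<infinity>]) simp
  with a show "last_tw f = \<infinity>" by (cases "last_tw f") auto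
qed

lemma exceeds: assumes "time_warp g" "g \<infinity> = \<infinity>" shows "\<exists>n. enat m \<le> g (enat n)"
proof (rule ccontr)
  assume "\<not> ?thesis"
  hence "\<forall>n. g (enat n) \<le> enat m" by (meson linear)
  hence "(SUP n. g (enat n)) \<le> enat m" by (simp add: SUP_least)
  with tw_inf[OF assms(1)] assms(2) show False by simp
qed

lemma comp_part: assumes f: "time_warp f" and g: "time_warp g"
  shows "last_tw (f \<circ> g) = \<infinity> \<longleftrightarrow> last_tw g = \<infinity> \<and> last_tw f = \<infinity>"
proof
  assume "last_tw (f \<circ> g) = \<infinity>"
  hence a: "\<forall>n. f (g (enat n)) \<noteq> f (g \<infinity>)" by (simp add: last_inf_iff)
  hence b: "\<forall>n. g (enat n) \<noteq> g \<infinity>" by metis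
  hence gi: "g \<infinity> = \<infinity>" using tw_attain[OF g] by metis
  have "\<forall>m. f (enat m) \<noteq> f \<infinity>"
  proof (intro allI notI)
    fix m assume fm: "f (enat m) = f \<infinity>"
    obtain n where "enat m \<le> g (enat n)" using exceeds[OF g gi] by blast
    hence "f (enat m) \<le> f (g (enat n))" using tw_mono[OF f] by (simp add: monoD)
    moreover have "f (g (enat n)) \<le> f \<infinity>" using tw_mono[OF f] by (simp add: monoD)
    ultimately have "f (g (enat n)) = f (g \<infinity>)" using fm gi by simp
    with a show False by blast
  qed
  with b show "last_tw g = \<infinity> \<and> last_tw f = \<infinity>" by (simp add: last_inf_iff)
next
  assume "last_tw g = \<infinity> \<and> last_tw f = \<infinity>"
  hence a: "\<forall>n. g (enat n) \<noteq> g \<infinity>" and b: "\<forall>n. f (enat n) \<noteq> f \<infinity>" by (simp_all add: last_inf_iff)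
  hence gi: "g \<infinity> = \<infinity>" using tw_attain[OF g] by metis
  have "\<forall>n. f (g (enat n)) \<noteq> f (g \<infinity>)"
  proof
    fix n
    have "g (enat n) \<noteq> \<infinity>" using a gi by simp
    then obtain k where "g (enat n) = enat k" by auto
    thus "f (g (enat n)) \<noteq> f (g \<infinity>)" using b gi by simp
  qed
  thus "last_tw (f \<circ> g) = \<infinity>" by (simp add: last_inf_iff)
qed

definition H :: "(enat \<Rightarrow> enat) \<Rightarrow> enat \<Rightarrow> enat" where
  "H f m = Sup {k. f k < m}"

lemma H_tw: "time_warp (H f)"
  unfolding time_warp_def
proof
  fix A :: "enat set"
  have "{k. f k < Sup A} = (\<Union>a\<in>A. {k. f k < a})" by (auto simp: less_Sup_iff)
  thus "H f (Sup A) = Sup (H f ` A)" unfolding H_def using SUP_UNION[of "\<lambda>x. x" "\<lambda>a. {k. f k < a}" A] by simp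
qed

lemma pred_Suc: "pred_tw (enat (Suc j)) = enat j"
  unfolding pred_tw_def
  by (rule antisym) (auto intro!: Sup_least Sup_upper)

lemma pred_ge: "f k < m \<Longrightarrow> f k \<le> pred_tw m"
  unfolding pred_tw_def
proof -
  assume "f k < m"
  then obtain j where "f k = enat j" by (cases "f k") auto
  with \<open>f k < m\<close> show "f k \<le> Sup {enat k |k. enat k < m}" by (auto intro: Sup_upper)
qed

lemma star_eq: assumes f: "time_warp f" shows "star f = H f"
  unfolding star_def
proof (rule Greatest_equality)
  show "time_warp (H f) \<and> f \<circ> H f \<le> pred_tw"
  proof
    show "time_warp (H f)" by (rule H_tw)
    show "f \<circ> H f \<le> pred_tw"
    proof (rule le_funI)
      fix m
      have "(f \<circ> H f) m = Sup (f ` {k. f k < m})" using f unfolding time_warp_def H_def by simp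
      also have "\<dots> \<le> pred_tw m" by (rule Sup_least) (auto intro: pred_ge)
      finally show "(f \<circ> H f) m \<le> pred_tw m" .
    qed
  qed
next
  fix h assume a: "time_warp h \<and> f \<circ> h \<le> pred_tw"
  hence h: "time_warp h" and le: "\<And>m. f (h m) \<le> pred_tw m" by (auto simp: le_fun_def)
  have fin: "h (enat j) \<le> H f (enat j)" for j
  proof (cases j)
    case 0
    have "h 0 = 0" using h unfolding time_warp_def by (metis Sup_empty image_empty bot_enat_def)
    thus ?thesis using 0 by (simp add: zero_enat_def[symmetric])
  next
    case (Suc i)
    have "f (h (enat j)) < enat j" using le[of "enat j"] Suc pred_Suc order_le_less_trans[of _ "enat i" "enat (Suc i)"] by simp
    thus ?thesis unfolding H_def by (auto intro: Sup_upper)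
  qed
  show "h \<le> H f"
  proof (rule le_funI)
    fix m show "h m \<le> H f m"
    proof (cases m)
      case (enat j) thus ?thesis using fin by simp
    next
      case infinity
      have "h \<infinity> = (SUP n. h (enat n))" by (rule tw_inf[OF h])
      also have "\<dots> \<le> (SUP n. H f (enat n))" using fin by (rule SUP_mono') 
      also have "\<dots> = H f \<infinity>" by (rule tw_inf[OF H_tw, symmetric])
      finally show ?thesis using infinity by simp
    qed
  qed
qed

lemma star_part: assumes f: "time_warp f"
  shows "last_tw (star f) = \<infinity> \<longleftrightarrow> last_tw f = \<infinity>"
proof
  assume a: "last_tw f = \<infinity>"
  hence b: "\<forall>n. f (enat n) \<noteq> f \<infinity>" by (simp add: last_inf_iff)
  hence fi: "f \<infinity> = \<infinity>" using tw_attain[OF f] by metis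
  have Hi: "H f \<infinity> = \<infinity>"
  proof -
    have "range enat \<subseteq> {k. f k < \<infinity>}" using b fi by auto
    hence "Sup (range enat) \<le> H f \<infinity>" unfolding H_def by (rule Sup_subset_mono)
    thus ?thesis by (simp add: Sup_range_enat)
  qed
  have "\<forall>n. H f (enat n) \<noteq> H f \<infinity>"
  proof
    fix n
    obtain i where i: "enat n \<le> f (enat i)" using exceeds[OF f fi] by blast
    have "\<forall>k\<in>{k. f k < enat n}. k \<le> enat i"
    proof
      fix k assume "k \<in> {k. f k < enat n}"
      hence "f k < f (enat i)" using i by simp
      thus "k \<le> enat i" using tw_mono[OF f] by (meson linear monoD not_le)
    qed
    hence "H f (enat n) \<le> enat i" unfolding H_def by (intro Sup_least) blast
    thus "H f (enat n) \<noteq> H f \<infinity>" using Hi enat_ile[of "H f (enat n)" i] by auto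
  qed
  thus "last_tw (star f) = \<infinity>" using star_eq[OF f] by (simp add: last_inf_iff)
next
  assume a: "last_tw (star f) = \<infinity>"
  hence b: "\<forall>n. H f (enat n) \<noteq> H f \<infinity>" using star_eq[OF f] by (simp add: last_inf_iff)
  show "last_tw f = \<infinity>"
  proof (rule ccontr)
    assume "last_tw f \<noteq> \<infinity>"
    then obtain N where N: "f (enat N) = f \<infinity>" by (auto simp: last_inf_iff)
    show False
    proof (cases "f \<infinity>")
      case (enat c)
      have "\<forall>k. f k \<le> f \<infinity>" using tw_mono[OF f] by (simp add: monoD)
      have lt: "enat c < enat (Suc c)" by simp
      have "\<forall>k. f k < enat (Suc c)" using \<open>\<forall>k. f k \<le> f \<infinity>\<close> enat le_less_trans[OF _ lt] by simp
      moreover have "\<forall>k. f k < \<infinity>" using \<open>\<forall>k. f k \<le> f \<infinity>\<close> enat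
        using enat_ile by fastforce
      ultimately have "H f (enat (Suc c)) = H f \<infinity>" unfolding H_def by simp
      with b show False by blast
    next
      case infinity
      have "\<forall>k\<in>{k. f k < \<infinity>}. k \<le> enat N"
      proof
        fix k assume "k \<in> {k. f k < \<infinity>}"
        hence "f k < f (enat N)" using N infinity by simp
        thus "k \<le> enat N" using tw_mono[OF f] by (meson linear monoD not_le)
      qed
      hence "H f \<infinity> \<le> enat N" unfolding H_def by (intro Sup_least) blast
      hence "H f \<infinity> \<noteq> \<infinity>" using enat_ile by blast
      then obtain n where "H f (enat n) = H f \<infinity>" using tw_attain[OF H_tw] by blast
      with b show False by blast
    qed
  qed
qed

theorem lemma2p6:
  assumes "time_warp f" and "time_warp g"
  shows "(last_tw (f \<circ> g) = \<infinity> \<longleftrightarrow> last_tw g = \<infinity> \<and> last_tw f = \<infinity>)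
       \<and> (last_tw (star f) = \<infinity> \<longleftrightarrow> last_tw f = \<infinity>)"
  using comp_part[OF assms] star_part[OF assms(1)] by blast

end
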